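(* For all $m\ge2$, $n\ge1$, $\mathrm{int}(CP_{m,n})\subseteq SCP_{m,n}\cap N^+_{m,n}$, where the interior is taken in $\mathbb{S}_{m,n}$.
   Context: $\mathbb{S}_{m,n}$ is the (finite-dimensional) space of symmetric real $m$th order $n$-dimensional tensors with its Euclidean topology. $(u^m)_{i_1\ldots i_m}=u_{i_1}\cdots u_{i_m}$. $CP_{m,n}$ is the set of $\mathcal{A}=\sum_{k=1}^r(u^{(k)})^m$ with $u^{(k)}\in\mathbb{R}^n_+$; $SCP_{m,n}$ is the set of such $\mathcal{A}$ admitting a decomposition with $\mathrm{span}\{u^{(1)},\dots,u^{(r)}\}=\mathbb{R}^n$. $N^+_{m,n}$ is the set of tensors all of whose entries are positive. *)

theory Defs
  imports "HOL-Analysis.Analysis"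
begin

text \<open>The dimension n is CARD('n) (a finite index type); vectors in R^n are real^'n.
 An m-th order tensor is a function on index lists ('n list), with entries at
 lists of length m; entries at other lists are required to be 0.\<close>

definition sym_tensors :: "nat \<Rightarrow> ('n::finite list \<Rightarrow> real) set" where
  "sym_tensors m = {A. (\<forall>is. length is \<noteq> m \<longrightarrow> A is = 0) \<and>
                       (\<forall>is js. mset is = mset js \<longrightarrow> A is = A js)}"

definition tpow :: "nat \<Rightarrow> real^'n::finite \<Rightarrow> ('n list \<Rightarrow> real)" where
  "tpow m u = (\<lambda>is. if length is = m then (\<Prod>i\<leftarrow>is. u $ i) else 0)"

definition CP :: "nat \<Rightarrow> ('n::finite list \<Rightarrow> real) set" where
  "CP m = {A. \<exists>us :: (real^'n) list. (\<forall>u\<in>set us. \<forall>i. u $ i \<ge> 0) \<and>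
                A = (\<lambda>is. \<Sum>u\<leftarrow>us. tpow m u is)}"

definition SCP :: "nat \<Rightarrow> ('n::finite list \<Rightarrow> real) set" where
  "SCP m = {A. \<exists>us :: (real^'n) list. (\<forall>u\<in>set us. \<forall>i. u $ i \<ge> 0) \<and>
                span (set us) = UNIV \<and>
                A = (\<lambda>is. \<Sum>u\<leftarrow>us. tpow m u is)}"

definition Npos :: "nat \<Rightarrow> ('n::finite list \<Rightarrow> real) set" where
  "Npos m = {A. \<forall>is. length is = m \<longrightarrow> A is > 0}"

definition tdist :: "nat \<Rightarrow> ('n::finite list \<Rightarrow> real) \<Rightarrow> ('n list \<Rightarrow> real) \<Rightarrow> real" where
  "tdist m A B = sqrt (\<Sum>is\<in>{is. length is = m}. (A is - B is)^2)"

definition sym_interior :: "nat \<Rightarrow> ('n::finite list \<Rightarrow> real) set \<Rightarrow> ('n list \<Rightarrow> real) set" where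
  "sym_interior m K = {A \<in> sym_tensors m. \<exists>e>0. \<forall>B\<in>sym_tensors m. tdist m A B < e \<longrightarrow> B \<in> K}"

end

theory Submission
  imports Defs
begin

lemma prod_list_mset_eq:
  assumes "mset xs = mset ys"
  shows "(\<Prod>i\<leftarrow>xs. f i) = (\<Prod>i\<leftarrow>ys. (f i :: real))"
proof -
  have "(\<Prod>i\<leftarrow>xs. f i) = prod_mset (image_mset f (mset xs))"
    by (metis mset_map prod_mset_prod_list)
  also have "\<dots> = (\<Prod>i\<leftarrow>ys. f i)" using assms
    by (metis mset_map prod_mset_prod_list)
  finally show ?thesis .
qed

lemma tpow_sym: "tpow m u \<in> sym_tensors m"
  unfolding sym_tensors_def tpow_def
proof (intro CollectI conjI allI impI)
  fix "is" js :: "'a list" assume "mset is = mset js"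
  then show "(if length is = m then (\<Prod>i\<leftarrow>is. u $ i) else 0) = (if length js = m then (\<Prod>i\<leftarrow>js. u $ i) else 0)"
    using prod_list_mset_eq[of "is" js "\<lambda>i. u $ i"] mset_eq_length by metis
qed simp

lemma sum_sym:
  fixes F :: "'x \<Rightarrow> 'n::finite list \<Rightarrow> real"
  assumes "\<And>x. x \<in> S \<Longrightarrow> F x \<in> sym_tensors m"
  shows "(\<lambda>is. \<Sum>x\<in>S. F x is) \<in> sym_tensors m"
  unfolding sym_tensors_def
proof (intro CollectI conjI allI impI)
  fix "is" :: "'n list" assume "length is \<noteq> m"
  then show "(\<Sum>x\<in>S. F x is) = 0" using assms unfolding sym_tensors_def by simp
next
  fix "is" js :: "'n list" assume "mset is = mset js"
  then show "(\<Sum>x\<in>S. F x is) = (\<Sum>x\<in>S. F x js)" using assms unfolding sym_tensors_def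
    by (intro sum.cong) blast+
qed

lemma tdist_lin:
  "tdist m A (\<lambda>is. A is + t * E is) = \<bar>t\<bar> * sqrt (\<Sum>is\<in>{is. length is = m}. (E is)^2)"
proof -
  have "tdist m A (\<lambda>is. A is + t * E is) = sqrt (t^2 * (\<Sum>is\<in>{is. length is = m}. (E is)^2))"
    unfolding tdist_def by (simp add: sum_distrib_left power_mult_distrib)
  also have "\<dots> = \<bar>t\<bar> * sqrt (\<Sum>is\<in>{is. length is = m}. (E is)^2)"
    by (simp add: real_sqrt_mult)
  finally show ?thesis .
qed

lemma interior_pert:
  assumes "A \<in> sym_interior m K" "E \<in> sym_tensors m"
  shows "\<exists>e>0. \<forall>t. \<bar>t\<bar> < e \<longrightarrow> (\<lambda>is. A is + t * E is) \<in> K"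
proof -
  from assms(1) obtain e where e: "e > 0" "A \<in> sym_tensors m"
    "\<And>B. B \<in> sym_tensors m \<Longrightarrow> tdist m A B < e \<Longrightarrow> B \<in> K"
    unfolding sym_interior_def by auto
  define C where "C = sqrt (\<Sum>is\<in>{is. length is = m}. (E is)^2)"
  have C: "C \<ge> 0" unfolding C_def by (simp add: sum_nonneg)
  show ?thesis
  proof (intro exI[of _ "e / (C + 1)"] conjI allI impI)
    show "e / (C + 1) > 0" using e C by simp
    fix t :: real assume t: "\<bar>t\<bar> < e / (C + 1)"
    have sym: "(\<lambda>is. A is + t * E is) \<in> sym_tensors m"
      using e(2) assms(2) unfolding sym_tensors_def mem_Collect_eq
      by (metis (no_types, lifting) add.right_neutral mult_zero_right)
    have "\<bar>t\<bar> * C \<le> \<bar>t\<bar> * (C + 1)" by (simp add: mult_left_mono)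
    also have "\<dots> < e" using t C by (simp add: pos_less_divide_eq)
    finally have "tdist m A (\<lambda>is. A is + t * E is) < e"
      unfolding tdist_lin C_def .
    then show "(\<lambda>is. A is + t * E is) \<in> K" using e(3) sym by blast
  qed
qed

lemma tpow_nonneg:
  assumes "\<forall>i. u $ i \<ge> 0"
  shows "tpow m u is \<ge> 0"
  unfolding tpow_def using assms by (auto intro!: prod_list_nonneg)

lemma CP_nonneg:
  assumes "B \<in> CP m"
  shows "B is \<ge> 0"
proof -
  obtain us where us: "\<forall>u\<in>set us. \<forall>i. u $ i \<ge> 0" "B = (\<lambda>is. \<Sum>u\<leftarrow>us. tpow m u is)"
    using assms unfolding CP_def by blast
  have "(\<Sum>u\<leftarrow>us. tpow m u is) \<ge> 0"
    using us(1) by (intro sum_list_nonneg) (auto intro: tpow_nonneg)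
  then show ?thesis using us(2) by simp
qed

lemma prod_list_scale:
  "(\<Prod>i\<leftarrow>xs. c * f i) = c ^ length xs * (\<Prod>i\<leftarrow>xs. (f i :: real))"
  by (induction xs) auto

lemma tpow_scale: "tpow m (d *\<^sub>R u) is = d ^ m * tpow m u is"
proof -
  have e: "(\<lambda>i. (d *\<^sub>R u) $ i) = (\<lambda>i. d * u $ i)" by auto
  show ?thesis unfolding tpow_def e using prod_list_scale[of d "\<lambda>i. u $ i" "is"] by simp
qed

lemma axis_scale: "c *\<^sub>R axis i (1::real) = axis i c"
  by (simp add: axis_def vec_eq_iff)

theorem mainTheorem13:
  fixes m :: nat
  assumes "m \<ge> 2"
  shows "sym_interior m (CP m :: ('n::finite list \<Rightarrow> real) set) \<subseteq> SCP m \<inter> Npos m"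
proof
  fix A :: "'n list \<Rightarrow> real"
  assume A: "A \<in> sym_interior m (CP m)"
  have Asym: "A \<in> sym_tensors m" using A unfolding sym_interior_def by auto
  have "A \<in> Npos m"
    unfolding Npos_def
  proof (intro CollectI allI impI)
    fix "is" :: "'n list" assume len: "length is = m"
    define E where "E = (\<lambda>js. if length js = m \<and> mset js = mset is then 1 else (0::real))"
    have Es: "E \<in> sym_tensors m" unfolding sym_tensors_def E_def by auto (metis mset_eq_length)+
    obtain e where e: "e > 0" "\<And>t. \<bar>t\<bar> < e \<Longrightarrow> (\<lambda>js. A js + t * E js) \<in> CP m"
      using interior_pert[OF A Es] by blast
    show "A is > 0"
    proof (rule ccontr)
      assume "\<not> A is > 0"
      have "(\<lambda>js. A js + (- e/2) * E js) \<in> CP m" using e by (intro e(2)) simp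
      from CP_nonneg[OF this, of "is"] \<open>\<not> A is > 0\<close> e(1) len show False
        by (simp add: E_def)
    qed
  qed
  moreover have "A \<in> SCP m"
  proof -
    obtain xs :: "'n list" where xs: "set xs = UNIV" "distinct xs"
      using finite_distinct_list[of "UNIV :: 'n set"] by auto
    define E where "E = (\<lambda>js. \<Sum>i\<in>UNIV. tpow m (axis i (1::real) :: real^'n) js)"
    have Es: "E \<in> sym_tensors m" unfolding E_def by (rule sum_sym) (rule tpow_sym)
    obtain e where e: "e > 0" "\<And>t. \<bar>t\<bar> < e \<Longrightarrow> (\<lambda>js. A js + t * E js) \<in> CP m"
      using interior_pert[OF A Es] by blast
    define d where "d = min 1 (e/2)"
    have d: "d > 0" "d \<le> 1" using e(1) by (auto simp: d_def)
    have "d ^ m \<le> d ^ 1" using d assms by (intro power_decreasing) auto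
    then have "d ^ m \<le> d" by simp
    then have "\<bar>- (d^m)\<bar> < e" using d e(1) by (simp add: d_def)
    then have "(\<lambda>js. A js + (- (d^m)) * E js) \<in> CP m" by (rule e(2))
    then obtain us :: "(real^'n) list" where us: "\<forall>u\<in>set us. \<forall>i. u $ i \<ge> 0"
      "(\<lambda>js. A js + (- (d^m)) * E js) = (\<lambda>js. \<Sum>u\<leftarrow>us. tpow m u js)"
      unfolding CP_def by auto
    define vs where "vs = us @ map (\<lambda>i. axis i d) xs"
    have "\<forall>u\<in>set vs. \<forall>i. u $ i \<ge> 0" using us(1) d unfolding vs_def
      by (auto simp: axis_def)
    moreover have "span (set vs) = UNIV"
    proof -
      have "Basis \<subseteq> span (set vs)"
      proof
        fix b :: "real^'n" assume "b \<in> Basis"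
        then obtain i where b: "b = axis i 1" by (auto simp: Basis_vec_def)
        have "axis i d \<in> set vs" using xs unfolding vs_def by auto
        then have "(1/d) *\<^sub>R axis i d \<in> span (set vs)"
          by (intro span_mul span_base)
        moreover have "(1/d) *\<^sub>R axis i d = b" using d b
          by (simp add: axis_def vec_eq_iff)
        ultimately show "b \<in> span (set vs)" by simp
      qed
      then have "span Basis \<subseteq> span (set vs)" by (metis span_minimal subspace_span)
      then show ?thesis by (auto simp: span_Basis)
    qed
    moreover have "A = (\<lambda>is. \<Sum>u\<leftarrow>vs. tpow m u is)"
    proof
      fix "is" :: "'n list"
      have "(\<Sum>u\<leftarrow>map (\<lambda>i. axis i d) xs. tpow m u is) = (\<Sum>i\<leftarrow>xs. tpow m (axis i d) is)"
        by (simp add: o_def)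
      also have "\<dots> = (\<Sum>i\<in>UNIV. tpow m (axis i d) is)"
        using xs by (simp add: sum_list_distinct_conv_sum_set)
      also have "\<dots> = d^m * E is"
        unfolding E_def sum_distrib_left
        by (intro sum.cong refl) (metis axis_scale tpow_scale)
      finally have "(\<Sum>u\<leftarrow>vs. tpow m u is) = (\<Sum>u\<leftarrow>us. tpow m u is) + d^m * E is"
        unfolding vs_def by simp
      also have "(\<Sum>u\<leftarrow>us. tpow m u is) = A is + (- (d^m)) * E is"
        using fun_cong[OF us(2), of "is"] by simp
      finally show "A is = (\<Sum>u\<leftarrow>vs. tpow m u is)" by simp
    qed
    ultimately show ?thesis unfolding SCP_def by blast
  qed
  ultimately show "A \<in> SCP m \<inter> Npos m" by blast
qed

end
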